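(* Let $\lambda$ be a partition of $n$ with largest part $\lambda_1$. For every integer $m$ with $\ell(\lambda)\le m\le n-(\lambda_1-1)$, the set $\mathrm{QYT}_{=m}(\lambda)$ is nonempty.
   Context: A partition $\lambda=(\lambda_1\ge\lambda_2\ge\cdots\ge\lambda_k>0)$ of $n$ has length $\ell(\lambda)=k$ and size $n=\sum_i\lambda_i$. Its (French) Young diagram has $\lambda_j$ left-justified boxes in row $j$, rows numbered $1,\dots,k$ from bottom to top; a box is $(i,j)$ with $i$ its column and $j$ its row. A semistandard Young tableau (SSYT) of shape $\lambda$ is a filling of the boxes with positive integers that weakly increase from left to right along rows and strictly increase from bottom to top along columns. An SSYT $T$ is quasi-Yamanouchi if for every integer $i>1$ that appears in $T$, the leftmost occurrence of $i$ lies in a column weakly left of (i.e. with column index $\le$ that of) some occurrence of $i-1$ in $T$. $\mathrm{QYT}_{=m}(\lambda)$ denotes the set of quasi-Yamanouchi tableaux of shape $\lambda$ whose largest entry is exactly $m$. *)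

theory Defs
  imports Main
begin

text \<open>A partition is a nonempty weakly decreasing list of positive integers
  (lam ! 0 is the largest part, lam ! (j-1) is the j-th row).\<close>
definition is_partition :: "nat list \<Rightarrow> bool" where
  "is_partition lam \<longleftrightarrow> lam \<noteq> [] \<and> sorted_wrt (\<ge>) lam \<and> (\<forall>x\<in>set lam. 0 < x)"

text \<open>French Young diagram: box (i,j) with column i and row j (1-based).\<close>
definition cells :: "nat list \<Rightarrow> (nat \<times> nat) set" where
  "cells lam = {(i, j). 1 \<le> j \<and> j \<le> length lam \<and> 1 \<le> i \<and> i \<le> lam ! (j - 1)}"

definition is_SSYT :: "nat list \<Rightarrow> (nat \<times> nat \<Rightarrow> nat) \<Rightarrow> bool" where
  "is_SSYT lam T \<longleftrightarrow>
     (\<forall>c. c \<notin> cells lam \<longrightarrow> T c = 0) \<and>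
     (\<forall>c\<in>cells lam. 1 \<le> T c) \<and>
     (\<forall>i i' j. (i, j) \<in> cells lam \<longrightarrow> (i', j) \<in> cells lam \<longrightarrow> i \<le> i' \<longrightarrow> T (i, j) \<le> T (i', j)) \<and>
     (\<forall>i j j'. (i, j) \<in> cells lam \<longrightarrow> (i, j') \<in> cells lam \<longrightarrow> j < j' \<longrightarrow> T (i, j) < T (i, j'))"

definition is_QY :: "nat list \<Rightarrow> (nat \<times> nat \<Rightarrow> nat) \<Rightarrow> bool" where
  "is_QY lam T \<longleftrightarrow>
     (\<forall>k. 1 < k \<longrightarrow> k \<in> T ` cells lam \<longrightarrow>
        (\<exists>c\<in>cells lam. T c = k - 1 \<and> Min {fst d | d. d \<in> cells lam \<and> T d = k} \<le> fst c))"

definition QYT_eq :: "nat \<Rightarrow> nat list \<Rightarrow> (nat \<times> nat \<Rightarrow> nat) set" where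
  "QYT_eq m lam = {T. is_SSYT lam T \<and> is_QY lam T \<and> Max (T ` cells lam) = m}"

end

theory Submission
  imports Defs
begin

definition hgt :: "nat list \<Rightarrow> nat \<Rightarrow> nat" where
  "hgt lam i = length (filter (\<lambda>x. i \<le> x) lam)"

definition gg :: "nat list \<Rightarrow> nat \<Rightarrow> nat" where
  "gg lam i = (\<Sum>t\<in>{1..<i}. hgt lam t - 1)"

definition TT :: "nat list \<Rightarrow> nat \<Rightarrow> nat \<times> nat \<Rightarrow> nat" where
  "TT lam d = (\<lambda>(i,j). if (i,j) \<in> cells lam then j + min d (gg lam i) else 0)"

lemma filter_prefix:
  fixes xs :: "nat list"
  assumes "sorted_wrt (\<ge>) xs" "j < length xs"
  shows "(i \<le> xs ! j) \<longleftrightarrow> j < length (filter (\<lambda>x. i \<le> x) xs)"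
  using assms
proof (induction xs arbitrary: j)
  case Nil then show ?case by simp
next
  case (Cons x xs)
  have le: "\<forall>y\<in>set xs. y \<le> x" using Cons.prems(1) by simp
  show ?case
  proof (cases "i \<le> x")
    case True
    then show ?thesis using Cons by (cases j) auto
  next
    case False
    hence "filter (\<lambda>y. i \<le> y) xs = []" using le by (auto simp: filter_empty_conv)
    moreover have "\<not> i \<le> (x#xs) ! j" using False le Cons.prems(2)
      by (cases j) (auto, meson le_trans nth_mem)
    ultimately show ?thesis using False by simp
  qed
qed

lemma cells_iff:
  assumes "is_partition lam"
  shows "(i,j) \<in> cells lam \<longleftrightarrow> 1 \<le> i \<and> 1 \<le> j \<and> j \<le> hgt lam i"
proof -
  have s: "sorted_wrt (\<ge>) lam" using assms by (simp add: is_partition_def)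
  have hl: "hgt lam i \<le> length lam" unfolding hgt_def by simp
  show ?thesis
  proof
    assume "(i,j) \<in> cells lam"
    then have "1 \<le> i" "1 \<le> j" "j \<le> length lam" "i \<le> lam ! (j-1)" by (auto simp: cells_def)
    then show "1 \<le> i \<and> 1 \<le> j \<and> j \<le> hgt lam i"
      using filter_prefix[OF s, of "j-1" i] unfolding hgt_def by fastforce
  next
    assume a: "1 \<le> i \<and> 1 \<le> j \<and> j \<le> hgt lam i"
    then have "j \<le> length lam" using hl by simp
    then show "(i,j) \<in> cells lam"
      using a filter_prefix[OF s, of "j-1" i] unfolding hgt_def cells_def by auto
  qed
qed

lemma sum_hgt:
  assumes "\<forall>x\<in>set xs. x \<le> L"
  shows "(\<Sum>t=1..L. length (filter (\<lambda>x. t \<le> x) xs)) = sum_list xs"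
  using assms
proof (induction xs)
  case Nil then show ?case by simp
next
  case (Cons x xs)
  have "(\<Sum>t=1..L. length (filter (\<lambda>y. t \<le> y) (x#xs)))
      = (\<Sum>t=1..L. (if t \<le> x then 1 else 0) + length (filter (\<lambda>y. t \<le> y) xs))"
    by (rule sum.cong) auto
  also have "\<dots> = (\<Sum>t=1..L. (if t \<le> x then 1 else 0::nat)) + sum_list xs"
    using Cons by (simp add: sum.distrib)
  also have "(\<Sum>t=1..L. (if t \<le> x then 1 else 0::nat)) = card {t\<in>{1..L}. t \<le> x}"
    by (simp add: sum.If_cases Int_def)
  also have "{t\<in>{1..L}. t \<le> x} = {1..x}" using Cons.prems by auto
  finally show ?case by simp
qed

lemma nat_ivt:
  fixes F :: "nat \<Rightarrow> nat"
  assumes "F 0 \<le> m" "m \<le> F N" "\<And>d. F (Suc d) \<le> Suc (F d)"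
  shows "\<exists>d. F d = m"
  using assms(2)
proof (induction N)
  case 0 then show ?case using assms(1) by (intro exI[of _ 0]) simp
next
  case (Suc N)
  show ?case
  proof (cases "m \<le> F N")
    case True then show ?thesis using Suc.IH by blast
  next
    case False then show ?thesis using Suc.prems assms(3)[of N]
      by (intro exI[of _ "Suc N"]) simp
  qed
qed

lemma gg_mono: "i \<le> i' \<Longrightarrow> gg lam i \<le> gg lam i'"
  unfolding gg_def by (rule sum_mono2) auto

lemma gg_step: "2 \<le> c \<Longrightarrow> gg lam c = gg lam (c-1) + (hgt lam (c-1) - 1)"
proof -
  assume "2 \<le> c"
  then have "{1..<c} = insert (c-1) {1..<c-1}" by auto
  then show ?thesis unfolding gg_def by simp
qed

lemma finite_cells: "finite (cells lam)"
proof -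
  have "cells lam \<subseteq> {0..Max (set lam)} \<times> {0..length lam}"
  proof
    fix c assume "c \<in> cells lam"
    then obtain i j where c: "c = (i,j)" "1 \<le> j" "j \<le> length lam" "i \<le> lam ! (j-1)"
      by (auto simp: cells_def)
    have "lam ! (j-1) \<in> set lam" using c by simp
    then have "lam ! (j-1) \<le> Max (set lam)" by simp
    then show "c \<in> {0..Max (set lam)} \<times> {0..length lam}" using c(1,3,4) by simp
  qed
  then show ?thesis by (rule finite_subset) simp
qed

lemma lfm: "(\<And>x. P x \<Longrightarrow> Q x) \<Longrightarrow> length (filter P xs) \<le> length (filter Q xs)"
  by (induction xs) auto

lemma hgt_anti: "i \<le> i' \<Longrightarrow> hgt lam i' \<le> hgt lam i"
  unfolding hgt_def by (rule lfm) auto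

lemma TT_in: "(i,j) \<in> cells lam \<Longrightarrow> TT lam d (i,j) = j + min d (gg lam i)"
  by (simp add: TT_def)

lemma gg1: "gg lam 1 = 0" by (simp add: gg_def)

lemma QY_TT:
  assumes P: "is_partition lam"
  shows "is_QY lam (TT lam d)"
  unfolding is_QY_def
proof (intro allI impI)
  fix v assume v1: "1 < v" and vin: "v \<in> TT lam d ` cells lam"
  let ?T = "TT lam d"
  define S where "S = {fst e | e. e \<in> cells lam \<and> ?T e = v}"
  have "S = fst ` {e \<in> cells lam. ?T e = v}" unfolding S_def by blast
  hence fS: "finite S" using finite_cells[of lam] by simp
  have neS: "S \<noteq> {}" using vin unfolding S_def by blast
  define c where "c = Min S"
  have "c \<in> S" using fS neS unfolding c_def by simp
  then obtain j0 where cj: "(c,j0) \<in> cells lam" "?T (c,j0) = v" unfolding S_def by auto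
  have ci: "1 \<le> c" "1 \<le> j0" "j0 \<le> hgt lam c" using cells_iff[OF P] cj(1) by auto
  have Tv: "v = j0 + min d (gg lam c)" using cj TT_in by simp
  show "\<exists>e\<in>cells lam. ?T e = v - 1 \<and> Min {fst d | d. d \<in> cells lam \<and> ?T d = v} \<le> fst e"
  proof (cases "2 \<le> j0")
    case True
    have "(c, j0-1) \<in> cells lam" using cells_iff[OF P] ci True by auto
    moreover have "?T (c, j0-1) = v - 1" using TT_in[OF calculation] Tv True by simp
    ultimately show ?thesis using c_def S_def by (intro bexI[of _ "(c,j0-1)"]) auto
  next
    case False
    hence j1: "j0 = 1" using ci by simp
    have "gg lam c > 0" using Tv j1 v1 by simp
    hence c2: "2 \<le> c" using ci gg1[of lam] by (metis One_nat_def le_antisym less_irrefl not_less_eq_eq numeral_2_eq_2)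
    define h' where "h' = hgt lam (c-1)"
    define a' where "a' = min d (gg lam (c-1))"
    have h1: "1 \<le> h'" using hgt_anti[of "c-1" c lam] ci unfolding h'_def by simp
    have st: "gg lam c = gg lam (c-1) + (h' - 1)" using gg_step[OF c2] h'_def by simp
    have lo: "a' \<le> min d (gg lam c)" unfolding a'_def using st by simp
    have hi: "min d (gg lam c) \<le> a' + (h' - 1)" unfolding a'_def using st by simp
    define j' where "j' = v - a'"
    have j'b: "1 \<le> j'" "j' \<le> h'" "v = j' + a'" using lo hi h1 Tv j1 unfolding j'_def by auto
    have cell: "(c-1, j') \<in> cells lam" using cells_iff[OF P] j'b c2 h'_def by auto
    have "?T (c-1, j') = v" using TT_in[OF cell] j'b a'_def by simp
    hence "c - 1 \<in> S" using cell unfolding S_def by force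
    hence "c \<le> c - 1" using fS unfolding c_def by simp
    then show ?thesis using c2 by simp
  qed
qed

lemma SSYT_TT:
  assumes P: "is_partition lam"
  shows "is_SSYT lam (TT lam d)"
  unfolding is_SSYT_def
proof (intro conjI allI ballI impI)
  fix c assume "c \<notin> cells lam" then show "TT lam d c = 0" by (cases c) (simp add: TT_def)
next
  fix c assume "c \<in> cells lam" then show "1 \<le> TT lam d c"
    by (cases c) (auto simp: TT_def cells_def)
next
  fix i i' j assume "(i,j) \<in> cells lam" "(i',j) \<in> cells lam" "i \<le> i'"
  then show "TT lam d (i,j) \<le> TT lam d (i',j)"
    using gg_mono[of i i' lam] by (simp add: TT_in min.coboundedI2 min_le_iff_disj)
next
  fix i j j' assume "(i,j) \<in> cells lam" "(i,j') \<in> cells lam" "j < j'"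
  then show "TT lam d (i,j) < TT lam d (i,j')" by (simp add: TT_in)
qed

theorem mainTheorem2:
  fixes lam :: "nat list" and m :: nat
  assumes "is_partition lam"
    and "length lam \<le> m"
    and "m \<le> sum_list lam - (hd lam - 1)"
  shows "QYT_eq m lam \<noteq> {}"
proof -
  note P = assms(1)
  have ne: "lam \<noteq> []" and s: "sorted_wrt (\<ge>) lam" and pos: "\<forall>x\<in>set lam. 0 < x"
    using P by (auto simp: is_partition_def)
  define L where "L = hd lam"
  define k where "k = length lam"
  define n where "n = sum_list lam"
  have L0: "L = lam ! 0" using ne unfolding L_def by (simp add: hd_conv_nth)
  have leL: "\<forall>x\<in>set lam. x \<le> L"
  proof
    fix x assume "x \<in> set lam"
    then obtain q where "q < length lam" "x = lam ! q" by (auto simp: in_set_conv_nth)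
    then show "x \<le> L" using s L0 by (cases q) (auto simp: sorted_wrt_iff_nth_less)
  qed
  have k0: "0 < k" using ne k_def by simp
  have L1: "1 \<le> L" using pos ne L0 by (simp add: Suc_leI)
  have hL: "1 \<le> hgt lam L" using filter_prefix[OF s, of 0 L] L0 ne unfolding hgt_def by (simp add: Suc_le_eq)
  have hpos: "1 \<le> hgt lam t" if "t \<le> L" for t using hgt_anti[OF that, of lam] hL by simp
  have sumh: "(\<Sum>t=1..L. hgt lam t) = n"
    using sum_hgt[OF leL] unfolding hgt_def n_def by simp
  have "(\<Sum>t\<in>{1..<L}. hgt lam t) = (\<Sum>t\<in>{1..<L}. (hgt lam t - 1) + 1)"
  proof (rule sum.cong)
    fix t assume "t \<in> {1..<L}"
    then have "1 \<le> hgt lam t" using hpos by simp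
    then show "hgt lam t = hgt lam t - 1 + 1" by simp
  qed simp
  also have "\<dots> = gg lam L + (L - 1)" unfolding gg_def by (simp only: sum.distrib) simp
  finally have g1: "(\<Sum>t\<in>{1..<L}. hgt lam t) = gg lam L + (L - 1)" .
  have "{1..L} = insert L {1..<L}" using L1 by auto
  hence "n = hgt lam L + (\<Sum>t\<in>{1..<L}. hgt lam t)" using sumh by simp
  hence gL: "gg lam L + hgt lam L = n - (L - 1) " using g1 by simp
  define F where "F d = Max (TT lam d ` cells lam)" for d
  have fin: "finite (cells lam)" by (rule finite_cells)
  have cne: "(1,k) \<in> cells lam" using cells_iff[OF P] hgt_anti[of 1 L lam] L1 hL k0
  proof -
    have "hgt lam 1 = k" unfolding hgt_def k_def using pos
      by (metis Suc_leI filter_True One_nat_def)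
    then show ?thesis using cells_iff[OF P] k0 by simp
  qed
  have F0: "F 0 \<le> m"
  proof -
    have "\<forall>c\<in>cells lam. TT lam 0 c \<le> k"
      by (auto simp: TT_def cells_def k_def)
    hence "F 0 \<le> k" unfolding F_def using fin cne by (subst Max_le_iff) auto
    then show ?thesis using assms(2) k_def by simp
  qed
  have FS: "F (Suc d) \<le> Suc (F d)" for d
  proof -
    have "\<forall>c\<in>cells lam. TT lam (Suc d) c \<le> Suc (F d)"
    proof
      fix c assume cc: "c \<in> cells lam"
      have "TT lam (Suc d) c \<le> Suc (TT lam d c)" using cc by (cases c) (auto simp: TT_def)
      moreover have "TT lam d c \<le> F d" unfolding F_def using fin cc by simp
      ultimately show "TT lam (Suc d) c \<le> Suc (F d)" by simp
    qed
    then show ?thesis unfolding F_def using fin cne by (subst Max_le_iff) auto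
  qed
  have FN: "m \<le> F (gg lam L)"
  proof -
    have cl: "(L, hgt lam L) \<in> cells lam" using cells_iff[OF P] L1 hL by simp
    have "TT lam (gg lam L) (L, hgt lam L) = n - (L - 1)" using TT_in[OF cl] gL by simp
    moreover have "TT lam (gg lam L) (L, hgt lam L) \<le> F (gg lam L)" unfolding F_def using fin cl by simp
    ultimately show ?thesis using assms(3) n_def L_def by simp
  qed
  obtain d where Fd: "F d = m" using nat_ivt[of F m, OF F0 FN FS] by blast
  have "TT lam d \<in> QYT_eq m lam"
    unfolding QYT_eq_def using SSYT_TT[OF P] QY_TT[OF P] Fd F_def by simp
  then show ?thesis by blast
qed

end
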